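(* Let $\mathcal{M}\subseteq\binom{[n]}{k}$ be a positroid with Grassmann necklace $(I_1,\dots,I_n)$ and decorated permutation $\pi^{:}=(\pi,col)$, and let $j\in[n]$ with $\pi(j)\ne j$. Let $\mathcal{M}':=\{H\in\mathcal{M}: j\in H\}$ and for each $a\in[n]$ let $K_a$ be the $\le_a$-minimal element of $\mathcal{M}'$ (in Gale order). Then for every $a\in[n]$: if $j\in I_a$ then $K_a=I_a$, and if $j\notin I_a$ then $$K_a=\bigl(I_a\setminus\{\max_a(I_a\setminus I_j)\}\bigr)\cup\{j\}.$$
   Context: Indices are taken modulo $n$; we identify $[n]$ with $\mathbb{Z}_n$. For $t\in[n]$, the total order $\le_t$ on $[n]$ is $t<_t t+1<_t\cdots<_t n<_t 1<_t\cdots<_t t-1$. For $A,B\in\binom{[n]}{k}$ with $A=\{i_1<_t\cdots<_t i_k\}$ and $B=\{j_1<_t\cdots<_t j_k\}$, write $A\le_t B$ (Gale order) iff $i_s\le_t j_s$ for all $s$. For $D\subseteq[n]$, $\max_a(D)$ is the largest element of $D$ in $\le_a$. A Grassmann necklace is a sequence $(I_1,\dots,I_n)$ of subsets of $[n]$ such that for each $i$: if $i\in I_i$ then $I_{i+1}=(I_i\setminus\{i\})\cup\{j'\}$ for some $j'\in[n]$, and if $i\notin I_i$ then $I_{i+1}=I_i$. A positroid is a set $\mathcal{M}\subseteq\binom{[n]}{k}$ for which there is a Grassmann necklace $(I_1,\dots,I_n)$ with $\mathcal{M}=\{H : H\ge_t I_t \text{ for all } t\in[n]\}$; then $I_t$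 is the $\le_t$-minimum of $\mathcal{M}$ and $(I_1,\dots,I_n)$ is called the Grassmann necklace of $\mathcal{M}$. A decorated permutation is a pair $(\pi,col)$ with $\pi\in S_n$ and $col$ a function from the fixed points of $\pi$ to $\{1,-1\}$. The necklace and decorated permutation correspond bijectively via: if $I_{i+1}=(I_i\setminus\{i\})\cup\{j'\}$ with $j'\ne i$ then $\pi(i)=j'$; if $I_{i+1}=I_i$ and $i\notin I_i$ then $\pi(i)=i$, $col(i)=1$; if $I_{i+1}=I_i$ and $i\in I_i$ then $\pi(i)=i$, $col(i)=-1$. Conversely $I_r=\{i\in[n] : i<_r\pi^{-1}(i)\text{ or }(\pi(i)=i\text{ and }col(i)=-1)\}$. *)

theory Defs
  imports Main
begin

text \<open>We work with [n] = {1..n} (natural numbers), indices taken cyclically.\<close>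

definition cnext :: "nat \<Rightarrow> nat \<Rightarrow> nat" where
  "cnext n i = (if i = n then 1 else i + 1)"

text \<open>Position of x in the cyclic order \<le>_t : t has rank 0, t+1 rank 1, ..., t-1 rank n-1.\<close>
definition crank :: "nat \<Rightarrow> nat \<Rightarrow> nat \<Rightarrow> nat" where
  "crank n t x = (x + n - t) mod n"

definition cle :: "nat \<Rightarrow> nat \<Rightarrow> nat \<Rightarrow> nat \<Rightarrow> bool" where
  "cle n t x y \<longleftrightarrow> crank n t x \<le> crank n t y"

definition csorted :: "nat \<Rightarrow> nat \<Rightarrow> nat set \<Rightarrow> nat list" where
  "csorted n t A = sort_key (crank n t) (sorted_list_of_set A)"

definition gale :: "nat \<Rightarrow> nat \<Rightarrow> nat set \<Rightarrow> nat set \<Rightarrow> bool" where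
  "gale n t A B \<longleftrightarrow>
     (let LA = csorted n t A; LB = csorted n t B in
       length LA = length LB \<and> (\<forall>s < length LA. cle n t (LA ! s) (LB ! s)))"

definition cmax :: "nat \<Rightarrow> nat \<Rightarrow> nat set \<Rightarrow> nat" where
  "cmax n a D = (THE x. x \<in> D \<and> (\<forall>y\<in>D. cle n a y x))"

definition ksubsets :: "nat \<Rightarrow> nat \<Rightarrow> nat set set" where
  "ksubsets n k = {H. H \<subseteq> {1..n} \<and> card H = k}"

definition grassmann_necklace :: "nat \<Rightarrow> (nat \<Rightarrow> nat set) \<Rightarrow> bool" where
  "grassmann_necklace n I \<longleftrightarrow>
     (\<forall>i\<in>{1..n}. I i \<subseteq> {1..n}) \<and>
     (\<forall>i\<in>{1..n}.
        (i \<in> I i \<longrightarrow> (\<exists>j'\<in>{1..n}. I (cnext n i) = (I i - {i}) \<union> {j'})) \<and>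
        (i \<notin> I i \<longrightarrow> I (cnext n i) = I i))"

definition positroid_with_necklace ::
    "nat \<Rightarrow> nat \<Rightarrow> nat set set \<Rightarrow> (nat \<Rightarrow> nat set) \<Rightarrow> bool" where
  "positroid_with_necklace n k M I \<longleftrightarrow>
     M \<subseteq> ksubsets n k \<and> grassmann_necklace n I \<and>
     M = {H \<in> ksubsets n k. \<forall>t\<in>{1..n}. gale n t (I t) H} \<and>
     (\<forall>t\<in>{1..n}. I t \<in> M \<and> (\<forall>H\<in>M. gale n t (I t) H))"

text \<open>The permutation part of the decorated permutation of the necklace I.\<close>
definition neck_perm :: "nat \<Rightarrow> (nat \<Rightarrow> nat set) \<Rightarrow> nat \<Rightarrow> nat" where
  "neck_perm n I i =
     (if i \<in> I i \<and> (\<exists>j'. j' \<noteq> i \<and> I (cnext n i) = (I i - {i}) \<union> {j'})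
      then (THE j'. j' \<noteq> i \<and> I (cnext n i) = (I i - {i}) \<union> {j'})
      else i)"

definition gale_min :: "nat \<Rightarrow> nat \<Rightarrow> nat set set \<Rightarrow> nat set \<Rightarrow> bool" where
  "gale_min n a F K \<longleftrightarrow> K \<in> F \<and> (\<forall>H\<in>F. gale n a K H)"

end

theory Submission
  imports Defs
begin

lemma crank_eq:
  assumes "u \<in> {1..n}" "x \<in> {1..n}"
  shows "crank n u x = (if u \<le> x then x - u else x + n - u)"
proof (cases "u \<le> x")
  case True
  then have "x + n - u = (x - u) + n" using assms by auto
  have "crank n u x = (x + n - u) mod n" by (simp add: crank_def)
  also have "\<dots> = ((x - u) + n) mod n" using \<open>x + n - u = (x - u) + n\<close> by (simp only:)
  also have "\<dots> = (x - u) mod n" by (simp only: mod_add_self2)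
  also have "\<dots> = x - u" using True assms by (intro mod_less) auto
  finally show ?thesis using True by simp
next
  case False
  then show ?thesis using assms by (simp add: crank_def)
qed

lemma crank_lt: "1 \<le> n \<Longrightarrow> crank n u x < n"
  by (simp add: crank_def)

lemma cnext_in: "x \<in> {1..n} \<Longrightarrow> cnext n x \<in> {1..n}"
  by (auto simp: cnext_def)

lemma crank_inj:
  assumes "u \<in> {1..n}" "x \<in> {1..n}" "y \<in> {1..n}" "crank n u x = crank n u y"
  shows "x = y"
  using assms crank_eq[OF assms(1) assms(2)] crank_eq[OF assms(1) assms(3)]
  by (auto split: if_splits)

lemma crank_cnext:
  assumes "u \<in> {1..n}" "x \<in> {1..n}"
  shows "crank n u (cnext n x) = (if crank n u x = n - 1 then 0 else crank n u x + 1)"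
  using assms crank_eq[OF assms(1) assms(2)] crank_eq[OF assms(1) cnext_in[OF assms(2)]]
  by (auto simp: cnext_def split: if_splits)

lemma iter_in: "u \<in> {1..n} \<Longrightarrow> (cnext n ^^ i) u \<in> {1..n}"
proof (induction i)
  case 0 then show ?case by simp
next
  case (Suc i) then show ?case by (simp only: funpow.simps comp_def) (rule cnext_in, rule Suc.IH[OF Suc.prems])
qed

lemma crank_iter: "u \<in> {1..n} \<Longrightarrow> i < n \<Longrightarrow> crank n u ((cnext n ^^ i) u) = i"
proof (induction i)
  case 0
  then show ?case by (simp add: crank_def)
next
  case (Suc i)
  then show ?case using crank_cnext[OF Suc.prems(1) iter_in[OF Suc.prems(1), of i]] by simp
qed

lemma iter_crank:
  assumes "u \<in> {1..n}" "x \<in> {1..n}"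
  shows "(cnext n ^^ crank n u x) u = x"
proof -
  have n: "1 \<le> n" using assms by auto
  have "crank n u ((cnext n ^^ crank n u x) u) = crank n u x"
    using crank_iter[OF assms(1) crank_lt[OF n]] by simp
  then show ?thesis using crank_inj[OF assms(1) iter_in[OF assms(1)] assms(2)] by blast
qed

lemma crank_shift:
  assumes "u \<in> {1..n}" "v \<in> {1..n}" "x \<in> {1..n}"
  shows "crank n v x = (if crank n u v \<le> crank n u x then crank n u x - crank n u v
                          else crank n u x + n - crank n u v)"
proof -
  note e = crank_eq[OF assms(1) assms(2)] crank_eq[OF assms(1) assms(3)] crank_eq[OF assms(2) assms(3)]
  have b: "1 \<le> u" "u \<le> n" "1 \<le> v" "v \<le> n" "1 \<le> x" "x \<le> n" using assms by auto
  show ?thesis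
    using b by (cases "u \<le> v"; cases "u \<le> x"; cases "v \<le> x"; simp add: e not_le le_diff_conv2 le_diff_conv; linarith)
qed

lemma step_lemma:
  fixes P :: "nat \<Rightarrow> bool"
  shows "\<not> P p \<Longrightarrow> P q \<Longrightarrow> p \<le> q \<Longrightarrow> \<exists>i. p \<le> i \<and> i < q \<and> \<not> P i \<and> P (Suc i)"
proof (induction q)
  case 0
  then show ?case by auto
next
  case (Suc q)
  show ?case
  proof (cases "P q")
    case True
    then have "p \<le> q" using Suc.prems by (cases "p = Suc q") auto
    then show ?thesis using Suc True by (metis less_Suc_eq)
  next
    case False
    then show ?thesis using Suc by (metis le_SucE less_Suc_eq_le order_refl)
  qed
qed


lemma card_filter_nth:
  assumes "distinct L"
  shows "card {x \<in> set L. P x} = card {s. s < length L \<and> P (L ! s)}"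
proof -
  have "{x \<in> set L. P x} = (nth L) ` {s. s < length L \<and> P (L!s)}"
    by (auto simp: in_set_conv_nth)
  moreover have "inj_on (nth L) {s. s < length L \<and> P (L!s)}"
    using assms by (simp add: inj_on_def nth_eq_iff_index_eq)
  ultimately show ?thesis by (simp add: card_image)
qed

lemma csorted_props:
  assumes "finite A"
  shows "set (csorted n t A) = A" "distinct (csorted n t A)"
    "sorted (map (crank n t) (csorted n t A))" "length (csorted n t A) = card A"
  using assms by (auto simp: csorted_def sorted_sort_key)

lemma sorted_map_mono:
  assumes "sorted (map f L)" "i \<le> j" "j < length L"
  shows "f (L ! i) \<le> f (L ! j)"
  using sorted_nth_mono[OF assms(1), of i j] assms by simp

lemma gale_iff:
  assumes "finite A" "finite B"
  shows "gale n t A B \<longleftrightarrow> card A = card B \<and>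
           (\<forall>r. card {x\<in>B. crank n t x < r} \<le> card {x\<in>A. crank n t x < r})"
proof -
  define f where "f = crank n t"
  define LA where "LA = csorted n t A"
  define LB where "LB = csorted n t B"
  note pA = csorted_props[OF assms(1), of n t, folded LA_def f_def]
  note pB = csorted_props[OF assms(2), of n t, folded LB_def f_def]
  have cA: "card {x\<in>A. f x < r} = card {s. s < length LA \<and> f (LA!s) < r}" for r
    using card_filter_nth[OF pA(2), of "\<lambda>x. f x < r"] pA(1) by simp
  have cB: "card {x\<in>B. f x < r} = card {s. s < length LB \<and> f (LB!s) < r}" for r
    using card_filter_nth[OF pB(2), of "\<lambda>x. f x < r"] pB(1) by simp
  have g: "gale n t A B \<longleftrightarrow> length LA = length LB \<and> (\<forall>s < length LA. f (LA!s) \<le> f (LB!s))"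
    by (simp add: gale_def LA_def LB_def f_def cle_def Let_def)
  show ?thesis
  proof
    assume "gale n t A B"
    then have l: "length LA = length LB" and le: "\<forall>s < length LA. f (LA!s) \<le> f (LB!s)"
      using g by auto
    have "card {x\<in>B. f x < r} \<le> card {x\<in>A. f x < r}" for r
    proof -
      have "{s. s < length LB \<and> f (LB!s) < r} \<subseteq> {s. s < length LA \<and> f (LA!s) < r}"
        using l le by fastforce
      then show ?thesis unfolding cA cB by (intro card_mono) auto
    qed
    then show "card A = card B \<and> (\<forall>r. card {x\<in>B. crank n t x < r} \<le> card {x\<in>A. crank n t x < r})"
      using l pA(4) pB(4) f_def by auto
  next
    assume h: "card A = card B \<and> (\<forall>r. card {x\<in>B. crank n t x < r} \<le> card {x\<in>A. crank n t x < r})"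
    have l: "length LA = length LB" using h pA(4) pB(4) by simp
    have "f (LA!s) \<le> f (LB!s)" if s: "s < length LA" for s
    proof (rule ccontr)
      assume c: "\<not> f (LA!s) \<le> f (LB!s)"
      define r where "r = Suc (f (LB!s))"
      have "{..s} \<subseteq> {s'. s' < length LB \<and> f (LB!s') < r}"
        using sorted_map_mono[OF pB(3)] s l unfolding r_def by (auto simp: le_imp_less_Suc)
      then have "Suc s \<le> card {s'. s' < length LB \<and> f (LB!s') < r}"
        using card_mono[of "{s'. s' < length LB \<and> f (LB!s') < r}" "{..s}"] by simp
      moreover have "{s'. s' < length LA \<and> f (LA!s') < r} \<subseteq> {..<s}"
      proof
        fix s' assume "s' \<in> {s'. s' < length LA \<and> f (LA!s') < r}"
        then have "s' < length LA" "f (LA!s') < r" by auto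
        then show "s' \<in> {..<s}"
          using sorted_map_mono[OF pA(3), of s s'] c unfolding r_def
          by (cases "s \<le> s'") auto
      qed
      then have "card {s'. s' < length LA \<and> f (LA!s') < r} \<le> s"
        using card_mono[of "{..<s}"] by fastforce
      moreover have "card {x\<in>B. f x < r} \<le> card {x\<in>A. f x < r}" using h unfolding f_def by blast
      ultimately show False unfolding cA cB by linarith
    qed
    then show "gale n t A B" using g l by auto
  qed
qed


lemma card_split:
  fixes f :: "nat \<Rightarrow> nat"
  assumes "finite X"
  shows "card {x\<in>X. f x < r} + card {x\<in>X. r \<le> f x} = card (X::nat set)"
proof -
  have "X = {x\<in>X. f x < r} \<union> {x\<in>X. r \<le> f x}" by (auto simp: not_le)
  moreover have "{x\<in>X. f x < r} \<inter> {x\<in>X. r \<le> f x} = {}" by auto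
  ultimately show ?thesis using assms card_Un_disjoint[of "{x\<in>X. f x < r}" "{x\<in>X. r \<le> f x}"]
    by (metis (no_types, lifting) finite_Un)
qed

lemma card_disj:
  assumes "finite X" "\<And>x. \<not> (P x \<and> Q x)"
  shows "card {x\<in>X. P x \<or> Q x} = card {x\<in>X. P x} + card {x\<in>X. Q x}"
proof -
  have "{x\<in>X. P x \<or> Q x} = {x\<in>X. P x} \<union> {x\<in>X. Q x}" by auto
  moreover have "{x\<in>X. P x} \<inter> {x\<in>X. Q x} = {}" using assms(2) by auto
  ultimately show ?thesis using assms(1) by (simp add: card_Un_disjoint)
qed

lemma cnt_swap:
  assumes "finite A" "m \<in> A" "j \<notin> A"
  shows "card {x\<in>(A - {m}) \<union> {j}. P x} + (if P m then 1 else 0)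
         = card {x\<in>A. P x} + (if P j then 1 else 0)"
proof -
  have mj: "m \<noteq> j" using assms by auto
  have e: "{x\<in>(A - {m}) \<union> {j}. P x} = ({x\<in>A. P x} - {m}) \<union> (if P j then {j} else {})"
    using mj by auto
  have f: "finite {x\<in>A. P x}" using assms by simp
  have g: "P m \<Longrightarrow> card {x\<in>A. P x} > 0" using f assms by (auto simp: card_gt_0_iff)
  show ?thesis
    unfolding e using assms f g by (cases "P m"; cases "P j") (auto simp: card_insert_if card_Diff_singleton_if)
qed

lemma neck_sub:
  assumes "grassmann_necklace n I" "s \<in> {1..n}"
  shows "I s - {s} \<subseteq> I (cnext n s)"
  using assms unfolding grassmann_necklace_def by (cases "s \<in> I s") fastforce+

lemma neck_fin:
  assumes "grassmann_necklace n I" "s \<in> {1..n}"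
  shows "finite (I s)" "I s \<subseteq> {1..n}"
proof -
  show "I s \<subseteq> {1..n}" using assms unfolding grassmann_necklace_def by auto
  then show "finite (I s)" using finite_subset by blast
qed

lemma walk_mono:
  assumes gn: "grassmann_necklace n I" and u: "u \<in> {1..n}"
    and nq: "\<forall>i. p \<le> i \<and> i < q \<longrightarrow> \<not> Q ((cnext n ^^ i) u)" and pq: "p \<le> q"
  shows "card {x \<in> I ((cnext n ^^ p) u). Q x} \<le> card {x \<in> I ((cnext n ^^ q) u). Q x}"
  using nq pq
proof (induction q)
  case 0
  then show ?case by simp
next
  case (Suc q)
  show ?case
  proof (cases "p = Suc q")
    case True then show ?thesis by simp
  next
    case False
    then have pq': "p \<le> q" using Suc.prems by simp
    have ih: "card {x \<in> I ((cnext n ^^ p) u). Q x} \<le> card {x \<in> I ((cnext n ^^ q) u). Q x}"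
      using Suc.IH Suc.prems pq' by auto
    define s where "s = (cnext n ^^ q) u"
    have s: "s \<in> {1..n}" using iter_in[OF u] s_def by simp
    have ns: "\<not> Q s" using Suc.prems pq' s_def by auto
    have "{x \<in> I s. Q x} \<subseteq> {x \<in> I (cnext n s). Q x}"
      using neck_sub[OF gn s] ns by auto
    moreover have "finite (I (cnext n s))" using neck_fin[OF gn cnext_in[OF s]] by simp
    ultimately have "card {x \<in> I s. Q x} \<le> card {x \<in> I (cnext n s). Q x}"
      by (intro card_mono) auto
    then show ?thesis using ih s_def by simp
  qed
qed

lemma removal:
  assumes gn: "grassmann_necklace n I" and u: "u \<in> {1..n}"
    and "m \<in> I ((cnext n ^^ p) u)" "m \<notin> I ((cnext n ^^ q) u)" "p \<le> q"
  shows "\<exists>i. p \<le> i \<and> i < q \<and> (cnext n ^^ i) u = m"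
proof -
  obtain i where i: "p \<le> i" "i < q" "m \<in> I ((cnext n ^^ i) u)" "m \<notin> I ((cnext n ^^ Suc i) u)"
    using step_lemma[of "\<lambda>i. m \<notin> I ((cnext n ^^ i) u)" p q] assms by auto
  have "m = (cnext n ^^ i) u"
    using neck_sub[OF gn iter_in[OF u, of i]] i(3,4) by auto
  then show ?thesis using i by auto
qed

lemma cmax_props:
  assumes a: "a \<in> {1..n}" and D: "D \<subseteq> {1..n}" "D \<noteq> {}"
  shows "cmax n a D \<in> D" "\<forall>y\<in>D. crank n a y \<le> crank n a (cmax n a D)"
proof -
  have fin: "finite D" using D finite_subset by blast
  define M0 where "M0 = Max (crank n a ` D)"
  have "M0 \<in> crank n a ` D" using fin D M0_def by simp
  then obtain x where x: "x \<in> D" "crank n a x = M0" by auto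
  have mx: "\<forall>y\<in>D. crank n a y \<le> crank n a x" using x fin M0_def by simp
  have "cmax n a D = x"
    unfolding cmax_def cle_def
  proof (rule the_equality)
    show "x \<in> D \<and> (\<forall>y\<in>D. crank n a y \<le> crank n a x)" using x mx by simp
  next
    fix z assume z: "z \<in> D \<and> (\<forall>y\<in>D. crank n a y \<le> crank n a z)"
    then have "crank n a z = crank n a x" using mx x by (meson le_antisym)
    then show "z = x" using crank_inj[OF a] z x D by blast
  qed
  then show "cmax n a D \<in> D" "\<forall>y\<in>D. crank n a y \<le> crank n a (cmax n a D)" using x mx by auto
qed


lemma part2:
  assumes n: "1 \<le> n" and a: "a \<in> {1..n}" and j: "j \<in> {1..n}"
    and A: "A \<subseteq> {1..n}" and B: "B \<subseteq> {1..n}" and H: "H \<subseteq> {1..n}"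
    and mA: "m \<in> A" and jA: "j \<notin> A" and jH: "j \<in> H"
    and F1: "\<forall>y\<in>A. crank n a m < crank n a y \<longrightarrow> y \<in> B"
    and F2: "crank n a m < crank n a j"
    and gAH: "\<forall>r. card {x\<in>H. crank n a x < r} \<le> card {x\<in>A. crank n a x < r}"
    and gBH: "\<forall>r. card {x\<in>H. crank n j x < r} \<le> card {x\<in>B. crank n j x < r}"
    and cAH: "card A = card H" and cBH: "card B = card H"
  shows "card {x\<in>H. crank n a x < r} \<le> card {x \<in> (A - {m}) \<union> {j}. crank n a x < r}"
proof -
  have fA: "finite A" and fB: "finite B" and fH: "finite H"
    using A B H finite_subset by blast+
  note sw = cnt_swap[OF fA mA jA, of "\<lambda>x. crank n a x < r"]
  show ?thesis
  proof (cases "crank n a m < r \<and> r \<le> crank n a j")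
    case False
    then have "card {x\<in>A. crank n a x < r} \<le> card {x \<in> (A - {m}) \<union> {j}. crank n a x < r}"
      using sw by (auto split: if_splits)
    with gAH show ?thesis by (meson le_trans)
  next
    case True
    define S1 where "S1 = (\<lambda>x. r \<le> crank n a x \<and> crank n a x < crank n a j)"
    define S2 where "S2 = (\<lambda>x. crank n a j < crank n a x)"
    have d12: "\<And>x. \<not> (S1 x \<and> S2 x)" unfolding S1_def S2_def by auto
    have "{x\<in>A. r \<le> crank n a x} = {x\<in>A. S1 x \<or> S2 x}"
    proof -
      have "crank n a x \<noteq> crank n a j" if "x \<in> A" for x
        using crank_inj[OF a _ j] that A jA by blast
      then show ?thesis using True unfolding S1_def S2_def by force
    qed
    then have geA: "card {x\<in>A. r \<le> crank n a x} = card {x\<in>A. S1 x} + card {x\<in>A. S2 x}"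
      using card_disj[OF fA d12] by simp
    have "insert j {x\<in>H. S1 x \<or> S2 x} \<subseteq> {x\<in>H. r \<le> crank n a x}"
      using True jH unfolding S1_def S2_def by auto
    moreover have "j \<notin> {x\<in>H. S1 x \<or> S2 x}" unfolding S1_def S2_def by auto
    ultimately have geH: "card {x\<in>H. S1 x} + card {x\<in>H. S2 x} + 1 \<le> card {x\<in>H. r \<le> crank n a x}"
      using card_disj[OF fH d12] card_mono[of "{x\<in>H. r \<le> crank n a x}" "insert j {x\<in>H. S1 x \<or> S2 x}"] fH
      by simp
    have s2: "card {x\<in>A. S2 x} \<le> card {x\<in>H. S2 x}"
    proof -
      have e: "\<And>X. {x\<in>X. S2 x} = {x\<in>X. Suc (crank n a j) \<le> crank n a x}" unfolding S2_def by auto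
      show ?thesis using gAH[rule_format, of "Suc (crank n a j)"]
          card_split[OF fA, of "crank n a" "Suc (crank n a j)"]
          card_split[OF fH, of "crank n a" "Suc (crank n a j)"] cAH unfolding e by linarith
    qed
    have s1B: "card {x\<in>B. S1 x} \<le> card {x\<in>H. S1 x}"
    proof -
      have e: "{x\<in>X. S1 x} = {x\<in>X. n + r - crank n a j \<le> crank n j x}" if X: "X \<subseteq> {1..n}" for X
      proof -
        have "S1 x \<longleftrightarrow> n + r - crank n a j \<le> crank n j x" if x: "x \<in> {1..n}" for x
        proof -
          have "crank n a x < n" "crank n a j < n" using crank_lt[OF n] by auto
          then show ?thesis using crank_shift[OF a j x] True unfolding S1_def by auto
        qed
        then show ?thesis using X by auto
      qed
      show ?thesis using gBH[rule_format, of "n + r - crank n a j"]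
          card_split[OF fB, of "crank n j" "n + r - crank n a j"]
          card_split[OF fH, of "crank n j" "n + r - crank n a j"] cBH unfolding e[OF B] e[OF H] by linarith
    qed
    have s1A: "card {x\<in>A. S1 x} \<le> card {x\<in>B. S1 x}"
    proof -
      have "{x\<in>A. S1 x} \<subseteq> {x\<in>B. S1 x}" using F1 True unfolding S1_def by auto
      then show ?thesis using fB by (intro card_mono) auto
    qed
    have "card {x\<in>H. crank n a x < r} + 1 \<le> card {x\<in>A. crank n a x < r}"
      using geA geH s2 s1B s1A card_split[OF fA, of "crank n a" r] card_split[OF fH, of "crank n a" r] cAH
      by linarith
    then show ?thesis using sw True by auto
  qed
qed


lemma part1:
  assumes gn: "grassmann_necklace n I" and n: "1 \<le> n"
    and a: "a \<in> {1..n}" and j: "j \<in> {1..n}" and t: "t \<in> {1..n}"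
    and mA: "m \<in> I a" and mB: "m \<notin> I j" and jB: "j \<in> I j" and jA: "j \<notin> I a"
    and F1: "\<forall>y\<in>I a. crank n a m < crank n a y \<longrightarrow> y \<in> I j"
    and F2: "crank n a m < crank n a j"
    and gTA: "\<forall>r. card {x\<in>I a. crank n t x < r} \<le> card {x\<in>I t. crank n t x < r}"
    and gTB: "\<forall>r. card {x\<in>I j. crank n t x < r} \<le> card {x\<in>I t. crank n t x < r}"
    and cAT: "card (I a) = card (I t)"
  shows "card {x \<in> (I a - {m}) \<union> {j}. crank n t x < r} \<le> card {x\<in>I t. crank n t x < r}"
proof -
  note fA = neck_fin[OF gn a] and fB = neck_fin[OF gn j] and fT = neck_fin[OF gn t]
  have m: "m \<in> {1..n}" using mA fA by auto
  note sw = cnt_swap[OF fA(1) mA jA, of "\<lambda>x. crank n t x < r"]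
  show ?thesis
  proof (cases "crank n t j < r \<and> r \<le> crank n t m")
    case False
    then have "card {x \<in> (I a - {m}) \<union> {j}. crank n t x < r} \<le> card {x\<in>I a. crank n t x < r}"
      using sw by (auto split: if_splits)
    with gTA show ?thesis by (meson le_trans)
  next
    case True
    have bd: "crank n t a < n" "crank n t j < n" "crank n t m < n" using crank_lt[OF n] by auto
    note shm = crank_shift[OF t a m] and shj = crank_shift[OF t a j]
    have "card {x\<in>I a. crank n t x < r} + 1 \<le> card {x\<in>I t. crank n t x < r}"
    proof (cases "r \<le> crank n t a")
      case True2: True
      have sub: "{x\<in>I a. crank n t x < r} \<subseteq> {x\<in>I j. crank n t x < r}"
      proof
        fix y assume y: "y \<in> {x\<in>I a. crank n t x < r}"
        then have yn: "y \<in> {1..n}" using fA by auto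
        note shy = crank_shift[OF t a yn]
        have "crank n t y < n" using crank_lt[OF n] by auto
        then have "crank n a m < crank n a y"
          using shy shm shj bd True True2 F2 y by (auto split: if_splits)
        then show "y \<in> {x\<in>I j. crank n t x < r}" using F1 y by auto
      qed
      have "insert j {x\<in>I a. crank n t x < r} \<subseteq> {x\<in>I j. crank n t x < r}"
        using sub jB True by auto
      then have "card (insert j {x\<in>I a. crank n t x < r}) \<le> card {x\<in>I j. crank n t x < r}"
        using fB by (intro card_mono) auto
      moreover have "card (insert j {x\<in>I a. crank n t x < r}) = card {x\<in>I a. crank n t x < r} + 1"
        using jA fA(1) by simp
      ultimately show ?thesis using gTB[rule_format, of r] by linarith
    next
      case False2: False
      have aj: "a \<noteq> j" using jA jB by auto
      have "crank n t a \<noteq> crank n t j" using crank_inj[OF t a j] aj by blast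
      then have ja: "crank n t j < crank n t a" using shm shj bd True False2 F2 by (auto split: if_splits)
      have itj: "(cnext n ^^ crank n t j) t = j" and ita: "(cnext n ^^ crank n t a) t = a"
        using iter_crank[OF t] a j by auto
      obtain i where i: "crank n t j \<le> i" "i < crank n t a"
          "m \<notin> I ((cnext n ^^ i) t)" "m \<in> I ((cnext n ^^ Suc i) t)"
        using step_lemma[of "\<lambda>i. m \<in> I ((cnext n ^^ i) t)" "crank n t j" "crank n t a"]
          itj ita mA mB ja by auto
      have ctit: "crank n t ((cnext n ^^ i') t) = i'" if "i' < crank n t a" for i'
        using crank_iter[OF t, of i'] that bd by simp
      define Q where "Q = (\<lambda>x. r \<le> crank n t x)"
      have w1: "card {x \<in> I ((cnext n ^^ 0) t). Q x} \<le> card {x \<in> I ((cnext n ^^ i) t). Q x}"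
        using walk_mono[OF gn t, of 0 i Q] ctit i False2 unfolding Q_def by auto
      have w2: "card {x \<in> I ((cnext n ^^ Suc i) t). Q x} \<le> card {x \<in> I ((cnext n ^^ crank n t a) t). Q x}"
        using walk_mono[OF gn t, of "Suc i" "crank n t a" Q] ctit i False2 unfolding Q_def by auto
      define s where "s = (cnext n ^^ i) t"
      have s: "s \<in> {1..n}" using iter_in[OF t] s_def by simp
      have ns: "\<not> Q s" using ctit[of i] i False2 unfolding s_def Q_def by auto
      have ms: "m \<notin> I s" "m \<in> I (cnext n s)" using i s_def by auto
      have "insert m {x \<in> I s. Q x} \<subseteq> {x \<in> I (cnext n s). Q x}"
        using neck_sub[OF gn s] ns ms True unfolding Q_def by auto
      then have "card (insert m {x \<in> I s. Q x}) \<le> card {x \<in> I (cnext n s). Q x}"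
        using neck_fin[OF gn cnext_in[OF s]] by (intro card_mono) auto
      then have en: "card {x \<in> I s. Q x} + 1 \<le> card {x \<in> I (cnext n s). Q x}"
        using ms neck_fin[OF gn s] by simp
      have "card {x \<in> I t. Q x} + 1 \<le> card {x \<in> I a. Q x}"
        using w1 w2 en ita unfolding s_def by simp
      then show ?thesis using card_split[OF fA(1), of "crank n t" r] card_split[OF fT(1), of "crank n t" r] cAT
        unfolding Q_def by linarith
    qed
    then show ?thesis using sw True by auto
  qed
qed


theorem mainTheorem2:
  fixes n k j :: nat and M :: "nat set set" and I :: "nat \<Rightarrow> nat set"
  assumes "1 \<le> n"
    and "positroid_with_necklace n k M I"
    and "j \<in> {1..n}"
    and "neck_perm n I j \<noteq> j"
  shows "\<forall>a\<in>{1..n}.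
           gale_min n a {H \<in> M. j \<in> H}
             (if j \<in> I a then I a
              else (I a - {cmax n a (I a - I j)}) \<union> {j})"
proof -
  note n = assms(1) and j = assms(3)
  note P = assms(2)[unfolded positroid_with_necklace_def]
  have Msub: "M \<subseteq> ksubsets n k" using P by (elim conjE)
  have gn: "grassmann_necklace n I" using P by (elim conjE)
  have Meq: "M = {H \<in> ksubsets n k. \<forall>t\<in>{1..n}. gale n t (I t) H}" using P by (elim conjE)
  have Imin: "\<forall>t\<in>{1..n}. I t \<in> M \<and> (\<forall>H\<in>M. gale n t (I t) H)" using P by (elim conjE)
  have ksub: "H \<subseteq> {1..n}" "card H = k" "finite H" if "H \<in> M" for H
    using Msub that unfolding ksubsets_def by (auto intro: finite_subset)
  have jI: "j \<in> I j"
  proof (rule ccontr)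
    assume "j \<notin> I j"
    then have "neck_perm n I j = j" unfolding neck_perm_def by simp
    with assms(4) show False by simp
  qed
  have galeC: "\<forall>r. card {x\<in>H. crank n t x < r} \<le> card {x\<in>I t. crank n t x < r}"
    if "t \<in> {1..n}" "H \<in> M" for t H
  proof -
    have g: "gale n t (I t) H" using Imin that by blast
    have "I t \<in> M" using Imin that(1) by blast
    then have f1: "finite (I t)" using ksub by blast
    have f2: "finite H" using ksub that(2) by blast
    show ?thesis using g unfolding gale_iff[OF f1 f2] by blast
  qed
  show ?thesis
  proof
    fix a assume a: "a \<in> {1..n}"
    show "gale_min n a {H \<in> M. j \<in> H}
             (if j \<in> I a then I a else (I a - {cmax n a (I a - I j)}) \<union> {j})"
    proof (cases "j \<in> I a")
      case True
      then show ?thesis using Imin a unfolding gale_min_def by simp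
    next
      case False
      define m where "m = cmax n a (I a - I j)"
      define K where "K = (I a - {m}) \<union> {j}"
      have IaM: "I a \<in> M" and IjM: "I j \<in> M" using Imin a j by auto
      note kA = ksub[OF IaM] and kB = ksub[OF IjM]
      have Dne: "I a - I j \<noteq> {}"
      proof
        assume "I a - I j = {}"
        then have "I a \<subseteq> I j" by auto
        then have "I a = I j" using card_subset_eq[OF kB(3)] kA kB by simp
        then show False using jI False by simp
      qed
      have Dsub: "I a - I j \<subseteq> {1..n}" using kA by auto
      note cm = cmax_props[OF a Dsub Dne, folded m_def]
      have mA: "m \<in> I a" and mB: "m \<notin> I j" using cm by auto
      have F1: "\<forall>y\<in>I a. crank n a m < crank n a y \<longrightarrow> y \<in> I j"
        using cm(2) by (meson Diff_iff not_le)
      have F2: "crank n a m < crank n a j"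
      proof -
        obtain i where i: "i < crank n a j" "(cnext n ^^ i) a = m"
          using removal[OF gn a, of m 0 "crank n a j"] mA mB iter_crank[OF a j] by auto
        have "i < n" using i crank_lt[OF n, of a j] by simp
        then show ?thesis using crank_iter[OF a] i by auto
      qed
      have Ksub: "K \<subseteq> {1..n}" using kA j unfolding K_def by auto
      have kpos: "card (I a) > 0" using mA kA by (auto simp: card_gt_0_iff)
      have Kcard: "card K = k" unfolding K_def using False kA kpos mA by (simp add: card_Diff_singleton)
      have fK: "finite K" using Ksub finite_subset by blast
      have KM: "K \<in> M"
      proof -
        have "gale n t (I t) K" if t: "t \<in> {1..n}" for t
        proof -
          have ItM: "I t \<in> M" using Imin t by blast
          have "\<forall>r. card {x\<in>K. crank n t x < r} \<le> card {x\<in>I t. crank n t x < r}"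
            unfolding K_def using part1[OF gn n a j t mA mB jI False F1 F2 galeC[OF t IaM] galeC[OF t IjM]]
              kA ksub[OF ItM] by simp
          then show ?thesis unfolding gale_iff[OF ksub(3)[OF ItM] fK] using ksub[OF ItM] Kcard by simp
        qed
        moreover have "K \<in> ksubsets n k" using Ksub Kcard unfolding ksubsets_def by blast
        ultimately show ?thesis by (subst Meq) blast
      qed
      have "gale n a K H" if H: "H \<in> M" "j \<in> H" for H
      proof -
        note kH = ksub[OF H(1)]
        have "\<forall>r. card {x\<in>H. crank n a x < r} \<le> card {x\<in>K. crank n a x < r}"
          unfolding K_def using part2[OF n a j kA(1) kB(1) kH(1) mA False H(2) F1 F2
              galeC[OF a H(1)] galeC[OF j H(1)]] kA kB kH by simp
        then show ?thesis unfolding gale_iff[OF fK kH(3)] using kH Kcard by simp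
      qed
      then show ?thesis using KM False unfolding gale_min_def K_def m_def by simp
    qed
  qed
qed

end
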